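(* Let $G=(A,B;E)$ be a bipartite graph with bipartition $\{A,B\}$, let $\bar G$ be its complement, and let $T,T'$ be $(p,p)$-bicliques of $G$. There is a TJ-move from $T$ to $T'$ in $G$ (i.e., $|T\setminus T'|=|T'\setminus T|=1$) if and only if there is a CS1-move from $T$ to $T'$ in $\bar G$.
   Context: A vertex set $S$ is a $(p,q)$-biclique of $G$ if $G[S]$ is isomorphic to $K_{p,q}$. For a graph $F$ and $S\subseteq V(F)$, $\mathsf{cc}_F(S)$ is the set of vertex sets of connected components of $F[S]$. A CS1-move from $T$ to $T'$ in $\bar G$ (where $T,T'$ have the same multiset of component sizes) means: $|\mathsf{cc}_{\bar G}(T)\setminus\mathsf{cc}_{\bar G}(T')|=|\mathsf{cc}_{\bar G}(T')\setminus\mathsf{cc}_{\bar G}(T)|=1$, and the unique elements $X\in\mathsf{cc}_{\bar G}(T)\setminus\mathsf{cc}_{\bar G}(T')$ and $X'\in\mathsf{cc}_{\bar G}(T')\setminus\mathsf{cc}_{\bar G}(T)$ satisfy that $\bar G[X\cup X']$ is connected and $|X\setminus X'|=|X'\setminus X|=1$. The complement $\bar G$ has the same vertex set, with two distinct vertices adjacent iff they are non-adjacent in $G$. *)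

theory Defs
  imports Main "HOL-Library.Multiset"
begin

definition simple_graph :: "'a set \<Rightarrow> ('a \<Rightarrow> 'a \<Rightarrow> bool) \<Rightarrow> bool" where
  "simple_graph V E \<longleftrightarrow> finite V \<and>
     (\<forall>x y. E x y \<longrightarrow> x \<in> V \<and> y \<in> V \<and> x \<noteq> y \<and> E y x)"

definition bipartite_graph :: "'a set \<Rightarrow> 'a set \<Rightarrow> 'a set \<Rightarrow> ('a \<Rightarrow> 'a \<Rightarrow> bool) \<Rightarrow> bool" where
  "bipartite_graph V A B E \<longleftrightarrow> simple_graph V E \<and> A \<union> B = V \<and> A \<inter> B = {} \<and>
     (\<forall>x\<in>A. \<forall>y\<in>A. \<not> E x y) \<and> (\<forall>x\<in>B. \<forall>y\<in>B. \<not> E x y)"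

definition complement :: "'a set \<Rightarrow> ('a \<Rightarrow> 'a \<Rightarrow> bool) \<Rightarrow> 'a \<Rightarrow> 'a \<Rightarrow> bool" where
  "complement V E x y \<longleftrightarrow> x \<in> V \<and> y \<in> V \<and> x \<noteq> y \<and> \<not> E x y"

definition is_biclique :: "'a set \<Rightarrow> ('a \<Rightarrow> 'a \<Rightarrow> bool) \<Rightarrow> nat \<Rightarrow> nat \<Rightarrow> 'a set \<Rightarrow> bool" where
  "is_biclique V E p q S \<longleftrightarrow> S \<subseteq> V \<and>
     (\<exists>X Y. X \<inter> Y = {} \<and> X \<union> Y = S \<and> finite X \<and> finite Y \<and> card X = p \<and> card Y = q \<and>
        (\<forall>x\<in>S. \<forall>y\<in>S. E x y \<longleftrightarrow> (x \<in> X \<and> y \<in> Y) \<or> (x \<in> Y \<and> y \<in> X)))"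

definition reach_in :: "('a \<Rightarrow> 'a \<Rightarrow> bool) \<Rightarrow> 'a set \<Rightarrow> 'a \<Rightarrow> 'a \<Rightarrow> bool" where
  "reach_in F S = (\<lambda>x y. x \<in> S \<and> y \<in> S \<and> F x y)\<^sup>*\<^sup>*"

definition connected_in :: "('a \<Rightarrow> 'a \<Rightarrow> bool) \<Rightarrow> 'a set \<Rightarrow> bool" where
  "connected_in F S \<longleftrightarrow> S \<noteq> {} \<and> (\<forall>x\<in>S. \<forall>y\<in>S. reach_in F S x y)"

definition cc :: "('a \<Rightarrow> 'a \<Rightarrow> bool) \<Rightarrow> 'a set \<Rightarrow> 'a set set" where
  "cc F S = {{y \<in> S. reach_in F S x y} | x. x \<in> S}"

definition cc_sizes :: "('a \<Rightarrow> 'a \<Rightarrow> bool) \<Rightarrow> 'a set \<Rightarrow> nat multiset" where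
  "cc_sizes F S = image_mset card (mset_set (cc F S))"

definition TJ_move :: "'a set \<Rightarrow> 'a set \<Rightarrow> bool" where
  "TJ_move T T' \<longleftrightarrow> card (T - T') = 1 \<and> card (T' - T) = 1"

text \<open>CS1-move from T to T' in F (including the standing requirement that T and T'
have the same multiset of component sizes).\<close>
definition CS1_move :: "('a \<Rightarrow> 'a \<Rightarrow> bool) \<Rightarrow> 'a set \<Rightarrow> 'a set \<Rightarrow> bool" where
  "CS1_move F T T' \<longleftrightarrow> cc_sizes F T = cc_sizes F T' \<and>
     card (cc F T - cc F T') = 1 \<and> card (cc F T' - cc F T) = 1 \<and>
     (\<forall>X X'. cc F T - cc F T' = {X} \<and> cc F T' - cc F T = {X'} \<longrightarrow>
        connected_in F (X \<union> X') \<and> card (X - X') = 1 \<and> card (X' - X) = 1)"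

end

theory Submission
  imports Defs
begin

lemma reach_closed:
  assumes "reach_in F S x y" "x \<in> K" "\<forall>a\<in>K. \<forall>b\<in>S. F a b \<longrightarrow> b \<in> K"
  shows "y \<in> K"
  using assms(1) unfolding reach_in_def
  by (induction rule: rtranclp_induct) (use assms in auto)

lemma reach_step: "a \<in> S \<Longrightarrow> b \<in> S \<Longrightarrow> F a b \<Longrightarrow> reach_in F S a b"
  unfolding reach_in_def by (simp add: r_into_rtranclp)

lemma reach_refl: "reach_in F S a a"
  unfolding reach_in_def by simp

lemma reach_trans: "reach_in F S a b \<Longrightarrow> reach_in F S b c \<Longrightarrow> reach_in F S a c"
  unfolding reach_in_def by simp

lemma cc_two:
  assumes "X \<inter> Y = {}" "X \<noteq> {}" "Y \<noteq> {}"
    "\<And>a b. a \<in> X \<Longrightarrow> b \<in> X \<Longrightarrow> a \<noteq> b \<Longrightarrow> F a b"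
    "\<And>a b. a \<in> Y \<Longrightarrow> b \<in> Y \<Longrightarrow> a \<noteq> b \<Longrightarrow> F a b"
    "\<And>a b. a \<in> X \<Longrightarrow> b \<in> Y \<Longrightarrow> \<not> F a b \<and> \<not> F b a"
  shows "cc F (X \<union> Y) = {X, Y}"
proof -
  have cX: "{y \<in> X \<union> Y. reach_in F (X \<union> Y) x y} = X" if "x \<in> X" for x
  proof
    show "{y \<in> X \<union> Y. reach_in F (X \<union> Y) x y} \<subseteq> X"
    proof
      fix y assume "y \<in> {y \<in> X \<union> Y. reach_in F (X \<union> Y) x y}"
      then have "reach_in F (X \<union> Y) x y" by simp
      moreover have "\<forall>a\<in>X. \<forall>b\<in>X \<union> Y. F a b \<longrightarrow> b \<in> X"
        using assms(6) by blast
      ultimately show "y \<in> X"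
        using reach_closed[of F "X \<union> Y" x y X] that by blast
    qed
    show "X \<subseteq> {y \<in> X \<union> Y. reach_in F (X \<union> Y) x y}"
    proof
      fix y assume y: "y \<in> X"
      have "reach_in F (X \<union> Y) x y"
      proof (cases "x = y")
        case True then show ?thesis using reach_refl by metis
      next
        case False then show ?thesis using reach_step[of x "X \<union> Y" y F] assms(4) that y by blast
      qed
      then show "y \<in> {y \<in> X \<union> Y. reach_in F (X \<union> Y) x y}" using y by blast
    qed
  qed
  have cY: "{y \<in> X \<union> Y. reach_in F (X \<union> Y) x y} = Y" if "x \<in> Y" for x
  proof
    show "{y \<in> X \<union> Y. reach_in F (X \<union> Y) x y} \<subseteq> Y"
    proof
      fix y assume "y \<in> {y \<in> X \<union> Y. reach_in F (X \<union> Y) x y}"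
      then have "reach_in F (X \<union> Y) x y" by simp
      moreover have "\<forall>a\<in>Y. \<forall>b\<in>X \<union> Y. F a b \<longrightarrow> b \<in> Y"
        using assms(6) by blast
      ultimately show "y \<in> Y"
        using reach_closed[of F "X \<union> Y" x y Y] that by blast
    qed
    show "Y \<subseteq> {y \<in> X \<union> Y. reach_in F (X \<union> Y) x y}"
    proof
      fix y assume y: "y \<in> Y"
      have "reach_in F (X \<union> Y) x y"
      proof (cases "x = y")
        case True then show ?thesis using reach_refl by metis
      next
        case False then show ?thesis using reach_step[of x "X \<union> Y" y F] assms(5) that y by blast
      qed
      then show "y \<in> {y \<in> X \<union> Y. reach_in F (X \<union> Y) x y}" using y by blast
    qed
  qed
  show ?thesis
    unfolding cc_def using cX cY assms(2,3) by blast
qed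

lemma cc_biclique:
  assumes sg: "simple_graph V E" and "T \<subseteq> V"
    "X \<inter> Y = {}" "X \<union> Y = T" "X \<noteq> {}" "Y \<noteq> {}"
    "\<forall>x\<in>T. \<forall>y\<in>T. E x y \<longleftrightarrow> (x \<in> X \<and> y \<in> Y) \<or> (x \<in> Y \<and> y \<in> X)"
  shows "cc (complement V E) T = {X, Y}"
proof -
  have "cc (complement V E) (X \<union> Y) = {X, Y}"
  proof (rule cc_two)
    show "X \<inter> Y = {}" "X \<noteq> {}" "Y \<noteq> {}" using assms by auto
    show "complement V E a b" if "a \<in> X" "b \<in> X" "a \<noteq> b" for a b
    proof -
      have ab: "a \<in> T" "b \<in> T" "a \<in> V" "b \<in> V" using that assms(2,4) by auto
      have "\<not> E a b" using assms(3,7) ab that by blast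
      then show ?thesis unfolding complement_def using ab that by simp
    qed
    show "complement V E a b" if "a \<in> Y" "b \<in> Y" "a \<noteq> b" for a b
    proof -
      have ab: "a \<in> T" "b \<in> T" "a \<in> V" "b \<in> V" using that assms(2,4) by auto
      have "\<not> E a b" using assms(3,7) ab that by blast
      then show ?thesis unfolding complement_def using ab that by simp
    qed
    show "\<not> complement V E a b \<and> \<not> complement V E b a" if "a \<in> X" "b \<in> Y" for a b
    proof -
      have ab: "a \<in> T" "b \<in> T" using that assms(4) by auto
      have "E a b" "E b a" using assms(7) ab that by blast+
      then show ?thesis unfolding complement_def by simp
    qed
  qed
  then show ?thesis using assms(4) by simp
qed

lemma star_conn:
  assumes "x0 \<in> S" "\<And>w. w \<in> S \<Longrightarrow> w \<noteq> x0 \<Longrightarrow> F w x0 \<and> F x0 w"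
  shows "connected_in F S"
proof -
  have a: "reach_in F S w x0 \<and> reach_in F S x0 w" if "w \<in> S" for w
  proof (cases "w = x0")
    case True then show ?thesis by (simp add: reach_refl)
  next
    case False
    then have "F w x0" "F x0 w" using assms(2) that by auto
    then show ?thesis using reach_step[of w S x0 F] reach_step[of x0 S w F] assms(1) that by simp
  qed
  have "reach_in F S x y" if "x \<in> S" "y \<in> S" for x y
    using a[OF that(1)] a[OF that(2)] reach_trans[of F S x x0 y] by simp
  then show ?thesis unfolding connected_in_def using assms(1) by blast
qed

lemma fwd2:
  assumes bip: "bipartite_graph V A B E" and "T \<subseteq> V" "T' \<subseteq> V"
    and T: "X \<inter> Y = {}" "X \<union> Y = T" "finite X" "finite Y" "card X = p" "card Y = p"
      "\<forall>x\<in>T. \<forall>y\<in>T. E x y \<longleftrightarrow> (x \<in> X \<and> y \<in> Y) \<or> (x \<in> Y \<and> y \<in> X)"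
    and T': "X' \<inter> Y = {}" "X' \<union> Y = T'" "finite X'" "card X' = p"
      "\<forall>x\<in>T'. \<forall>y\<in>T'. E x y \<longleftrightarrow> (x \<in> X' \<and> y \<in> Y) \<or> (x \<in> Y \<and> y \<in> X')"
    and p: "p \<noteq> 0" and u: "T - T' = {u}" and v: "T' - T = {v}" and uX: "u \<in> X"
  shows "CS1_move (complement V E) T T'"
proof -
  let ?C = "complement V E"
  have sg: "simple_graph V E" using bip unfolding bipartite_graph_def by simp
  have ne: "X \<noteq> {}" "Y \<noteq> {}" "X' \<noteq> {}" using T T' p by auto
  have ccT: "cc ?C T = {X, Y}" by (rule cc_biclique) (use sg assms ne in auto)
  have ccT': "cc ?C T' = {X', Y}" by (rule cc_biclique) (use sg assms ne in auto)
  have uT: "u \<in> T" "u \<notin> T'" "v \<in> T'" "v \<notin> T" using u v by auto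
  have T'eq: "T' = (T - {u}) \<union> {v}" using u v by blast
  have X'T: "X' = T' - Y" using T'(1,2) by blast
  have vY: "v \<notin> Y" using uT(4) T(2) by blast
  have X'eq: "X' = X - {u} \<union> {v}"
    unfolding X'T T'eq using T(1,2) vY uX by blast
  have neq: "X \<noteq> X'" "X \<noteq> Y" "X' \<noteq> Y" using uT uX T T' X'eq by auto
  have d1: "cc ?C T - cc ?C T' = {X}" using ccT ccT' neq by auto
  have d2: "cc ?C T' - cc ?C T = {X'}" using ccT ccT' neq by auto
  have sizes: "cc_sizes ?C T = cc_sizes ?C T'"
    unfolding cc_sizes_def ccT ccT' using neq T T' by simp
  have c1: "card (X - X') = 1"
  proof -
    have "X - X' = {u}" using X'eq uX uT T by auto
    then show ?thesis by simp
  qed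
  have c2: "card (X' - X) = 1"
  proof -
    have "X' - X = {v}" using X'eq uX uT T by auto
    then show ?thesis by simp
  qed
  have Csym: "?C a b \<Longrightarrow> ?C b a" for a b using sg unfolding complement_def simple_graph_def by blast
  have conn: "connected_in ?C (X \<union> X')"
  proof (cases "X - {u} = {}")
    case True
    then have Xu: "X = {u}" using uX by auto
    then have X'v: "X' = {v}" using X'eq by auto
    have "p = 1" using T Xu by simp
    then obtain y where Yy: "Y = {y}" using T by (metis card_1_singletonE)
    have "E u y" using T Xu Yy by auto
    have "E v y" using T' X'v Yy by auto
    have "\<not> E u v"
    proof -
      have V: "u \<in> V" "v \<in> V" "y \<in> V" using uT assms(2,3) T Yy by auto
      show ?thesis using bip V \<open>E u y\<close> \<open>E v y\<close> unfolding bipartite_graph_def by blast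
    qed
    then have "?C u v" using uT assms(2,3) unfolding complement_def by auto
    then show ?thesis using Csym Xu X'v by (intro star_conn[of u]) auto
  next
    case False
    then obtain x0 where x0: "x0 \<in> X" "x0 \<noteq> u" by auto
    have x0T': "x0 \<in> X'" using X'eq x0 by auto
    show ?thesis
    proof (rule star_conn[of x0])
      show "x0 \<in> X \<union> X'" using x0 by simp
      fix w assume w: "w \<in> X \<union> X'" "w \<noteq> x0"
      have "?C w x0"
      proof (cases "w \<in> X")
        case True
        then show ?thesis using x0 w T assms(2) unfolding complement_def by auto
      next
        case False
        then have "w \<in> X'" using w by auto
        then show ?thesis using x0T' w T' assms(3) unfolding complement_def by auto
      qed
      then show "?C w x0 \<and> ?C x0 w" using Csym by blast
    qed
  qed
  show ?thesis unfolding CS1_move_def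
    using sizes d1 d2 c1 c2 conn by auto
qed

lemma fwd:
  assumes bip: "bipartite_graph V A B E" and "T \<subseteq> V" "T' \<subseteq> V"
    and T: "X \<inter> Y = {}" "X \<union> Y = T" "finite X" "finite Y" "card X = p" "card Y = p"
      "\<forall>x\<in>T. \<forall>y\<in>T. E x y \<longleftrightarrow> (x \<in> X \<and> y \<in> Y) \<or> (x \<in> Y \<and> y \<in> X)"
    and T': "X' \<inter> Y' = {}" "X' \<union> Y' = T'" "finite X'" "finite Y'" "card X' = p" "card Y' = p"
      "\<forall>x\<in>T'. \<forall>y\<in>T'. E x y \<longleftrightarrow> (x \<in> X' \<and> y \<in> Y') \<or> (x \<in> Y' \<and> y \<in> X')"
    and p: "p \<noteq> 0" and u: "T - T' = {u}" and v: "T' - T = {v}" and uX: "u \<in> X"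
  shows "CS1_move (complement V E) T T'"
proof -
  have YT': "Y \<subseteq> T'" using T(1,2) u uX by blast
  have sub: "Y \<subseteq> X' \<or> Y \<subseteq> Y'"
  proof (rule ccontr)
    assume "\<not> (Y \<subseteq> X' \<or> Y \<subseteq> Y')"
    then obtain a b where ab: "a \<in> Y" "a \<notin> X'" "b \<in> Y" "b \<notin> Y'" by blast
    have a': "a \<in> Y'" "b \<in> X'" using ab YT' T'(2) by blast+
    have "a \<in> T'" "b \<in> T'" using ab YT' by blast+
    then have "E b a" using T'(7) a' by blast
    moreover have "a \<in> T" "b \<in> T" using ab T(2) by blast+
    ultimately show False using T(7) T(1) ab by blast
  qed
  show ?thesis
  proof (cases "Y \<subseteq> Y'")
    case True
    then have "Y = Y'" using card_subset_eq[OF T'(4) True] T(6) T'(6) by simp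
    then show ?thesis
      using fwd2[OF bip assms(2,3) T(1-7), of X' u v] T' p u v uX by blast
  next
    case False
    then have s: "Y \<subseteq> X'" using sub by blast
    then have YX: "Y = X'" using card_subset_eq[OF T'(3) s] T(6) T'(5) by simp
    have ch: "\<forall>x\<in>T'. \<forall>y\<in>T'. E x y \<longleftrightarrow> (x \<in> Y' \<and> y \<in> Y) \<or> (x \<in> Y \<and> y \<in> Y')"
      using T'(7) YX by blast
    have "Y' \<inter> Y = {}" "Y' \<union> Y = T'" using T'(1,2) YX by blast+
    then show ?thesis
      using fwd2[OF bip assms(2,3) T(1-7), of Y' u v] ch T' p u v uX by blast
  qed
qed

theorem lemma6:
  fixes V A B :: "'a set" and E :: "'a \<Rightarrow> 'a \<Rightarrow> bool" and p :: nat and T T' :: "'a set"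
  assumes "bipartite_graph V A B E"
    and "is_biclique V E p p T"
    and "is_biclique V E p p T'"
  shows "TJ_move T T' \<longleftrightarrow> CS1_move (complement V E) T T'"
proof -
  let ?C = "complement V E"
  have sg: "simple_graph V E" using assms(1) unfolding bipartite_graph_def by simp
  have TV: "T \<subseteq> V" "T' \<subseteq> V" using assms(2,3) unfolding is_biclique_def by auto
  obtain X Y where T: "X \<inter> Y = {}" "X \<union> Y = T" "finite X" "finite Y" "card X = p" "card Y = p"
      "\<forall>x\<in>T. \<forall>y\<in>T. E x y \<longleftrightarrow> (x \<in> X \<and> y \<in> Y) \<or> (x \<in> Y \<and> y \<in> X)"
    using assms(2) unfolding is_biclique_def by blast
  obtain X' Y' where T': "X' \<inter> Y' = {}" "X' \<union> Y' = T'" "finite X'" "finite Y'" "card X' = p" "card Y' = p"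
      "\<forall>x\<in>T'. \<forall>y\<in>T'. E x y \<longleftrightarrow> (x \<in> X' \<and> y \<in> Y') \<or> (x \<in> Y' \<and> y \<in> X')"
    using assms(3) unfolding is_biclique_def by blast
  show ?thesis
  proof (cases "p = 0")
    case True
    then have "T = {}" "T' = {}" using T T' by auto
    then show ?thesis unfolding TJ_move_def CS1_move_def cc_def by simp
  next
    case False
    have ne: "X \<noteq> {}" "Y \<noteq> {}" "X' \<noteq> {}" "Y' \<noteq> {}" using T T' False by auto
    have ccT: "cc ?C T = {X, Y}" by (rule cc_biclique[OF sg TV(1) T(1,2) ne(1,2) T(7)])
    have ccT': "cc ?C T' = {X', Y'}" by (rule cc_biclique[OF sg TV(2) T'(1,2) ne(3,4) T'(7)])
    have XY: "X \<noteq> Y" "X' \<noteq> Y'" using T(1) T'(1) ne by auto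
    show ?thesis
    proof
      assume "TJ_move T T'"
      then obtain u v where u: "T - T' = {u}" and v: "T' - T = {v}"
        unfolding TJ_move_def by (meson card_1_singletonE)
      have "u \<in> X \<or> u \<in> Y" using u T(2) by blast
      then show "CS1_move ?C T T'"
      proof
        assume "u \<in> X"
        then show ?thesis using fwd[OF assms(1) TV T(1-7) T' False u v] by blast
      next
        assume uY: "u \<in> Y"
        have T2: "Y \<inter> X = {}" "Y \<union> X = T" using T by blast+
        have ch: "\<forall>x\<in>T. \<forall>y\<in>T. E x y \<longleftrightarrow> (x \<in> Y \<and> y \<in> X) \<or> (x \<in> X \<and> y \<in> Y)"
          using T(7) by blast
        show ?thesis using fwd[OF assms(1) TV T2 T(4,3,6,5) ch T' False u v uY] by blast
      qed
    next
      assume cs: "CS1_move ?C T T'"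
      then obtain Z where Z: "cc ?C T - cc ?C T' = {Z}"
        unfolding CS1_move_def by (meson card_1_singletonE)
      obtain Z' where Z': "cc ?C T' - cc ?C T = {Z'}"
        using cs unfolding CS1_move_def by (meson card_1_singletonE)
      have all: "\<forall>X X'. cc ?C T - cc ?C T' = {X} \<and> cc ?C T' - cc ?C T = {X'} \<longrightarrow>
        connected_in ?C (X \<union> X') \<and> card (X - X') = 1 \<and> card (X' - X) = 1"
        using cs unfolding CS1_move_def by (elim conjE)
      have cz: "card (Z - Z') = 1 \<and> card (Z' - Z) = 1"
        using all[rule_format, OF conjI[OF Z Z']] by (elim conjE) (intro conjI)
      have Z2: "{X, Y} - {X', Y'} = {Z}" using Z ccT ccT' by simp
      have Z2': "{X', Y'} - {X, Y} = {Z'}" using Z' ccT ccT' by simp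
      have "Z \<in> {X, Y} - {X', Y'}" unfolding Z2 by simp
      then have Zin12: "Z \<in> {X, Y}" "Z \<notin> {X', Y'}" by auto
      have "Z' \<in> {X', Y'} - {X, Y}" unfolding Z2' by simp
      then have Zin34: "Z' \<in> {X', Y'}" "Z' \<notin> {X, Y}" by auto
      note Zin = Zin12 Zin34
      have rest: "w \<in> {X', Y'}" if "w \<in> {X, Y}" "w \<noteq> Z" for w
      proof (rule ccontr)
        assume "w \<notin> {X', Y'}"
        then have "w \<in> {X, Y} - {X', Y'}" using that(1) by (rule DiffI[rotated])
        then have "w \<in> {Z}" unfolding Z2 .
        then show False using that(2) by simp
      qed
      have "T - T' = Z - Z' \<and> T' - T = Z' - Z"
      proof -
        obtain W where W: "T = Z \<union> W" "T' = Z' \<union> W" "Z \<inter> W = {}" "Z' \<inter> W = {}"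
        proof (cases "Z = X")
          case True
          then have "Y \<in> {X', Y'}" by (intro rest) (use XY in auto)
          then have "Y = X' \<and> Z' = Y' \<or> Y = Y' \<and> Z' = X'" using Zin True by blast
          then show ?thesis
          proof
            assume h: "Y = X' \<and> Z' = Y'"
            show ?thesis by (rule that[of Y]) (use h True T(1,2) T'(1,2) in auto)
          next
            assume h: "Y = Y' \<and> Z' = X'"
            show ?thesis by (rule that[of Y]) (use h True T(1,2) T'(1,2) in auto)
          qed
        next
          case False
          then have ZY: "Z = Y" using Zin by blast
          then have "X \<in> {X', Y'}" by (intro rest) (use XY in auto)
          then have "X = X' \<and> Z' = Y' \<or> X = Y' \<and> Z' = X'" using Zin ZY by blast
          then show ?thesis
          proof
            assume h: "X = X' \<and> Z' = Y'"
            show ?thesis by (rule that[of X]) (use h ZY T(1,2) T'(1,2) in auto)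
          next
            assume h: "X = Y' \<and> Z' = X'"
            show ?thesis by (rule that[of X]) (use h ZY T(1,2) T'(1,2) in auto)
          qed
        qed
        then show ?thesis by blast
      qed
      then show "TJ_move T T'" unfolding TJ_move_def using cz by (elim conjE) simp
    qed
  qed
qed

end
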